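(* Let $G$ be a graph and $\{\hat C,\hat I,\hat Q\}$ a partition of $V(G)$ (parts may be empty) such that: (1) $\hat C$ is a clique and $\hat I$ is an independent set; (2) $\hat Q$ is a clique or an independent set, and $|\hat Q|\ge2$; (3) every vertex of $\hat Q$ is adjacent to every vertex of $\hat C$ and to no vertex of $\hat I$; (4) if $\hat Q$ is a clique, every vertex of $\hat C$ has a neighbor in $\hat I$; (5) if $\hat Q$ is an independent set, every vertex of $\hat I$ has a non-neighbor in $\hat C$. Then $G$ is a split graph, and $\hat C$, $\hat I$, $\hat Q$ are respectively its always-clique set, always-independent set, and questioning set.
   Context: A split partition of a graph $G$ is an ordered pair $(C',I')$ of disjoint sets (possibly empty) with $C'\cup I'=V(G)$, $C'$ a clique and $I'$ an independent set; $G$ is a split graph if it has a split partition. The always-clique set of a split graph is the set of vertices lying in $C'$ for every split partition $(C',I')$; the always-independent set is the set of vertices lying in $I'$ for every split partition; the questioning set is the set of vertices $v$ for which there is a split partition with $v\in C'$ and a split partition with $v\in I'$. *)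

theory Defs
  imports Main
begin

text \<open>A (finite, simple) graph is given by a finite vertex set V and a symmetric,
irreflexive adjacency relation E (only its restriction to V matters).\<close>

definition graph :: "'a set \<Rightarrow> ('a \<Rightarrow> 'a \<Rightarrow> bool) \<Rightarrow> bool" where
  "graph V E \<longleftrightarrow> finite V \<and> (\<forall>u v. E u v \<longrightarrow> E v u) \<and> (\<forall>v. \<not> E v v)"

definition is_clique :: "('a \<Rightarrow> 'a \<Rightarrow> bool) \<Rightarrow> 'a set \<Rightarrow> bool" where
  "is_clique E S \<longleftrightarrow> (\<forall>u\<in>S. \<forall>v\<in>S. u \<noteq> v \<longrightarrow> E u v)"

definition is_independent :: "('a \<Rightarrow> 'a \<Rightarrow> bool) \<Rightarrow> 'a set \<Rightarrow> bool" where
  "is_independent E S \<longleftrightarrow> (\<forall>u\<in>S. \<forall>v\<in>S. \<not> E u v)"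

definition split_partition :: "'a set \<Rightarrow> ('a \<Rightarrow> 'a \<Rightarrow> bool) \<Rightarrow> 'a set \<Rightarrow> 'a set \<Rightarrow> bool" where
  "split_partition V E C I \<longleftrightarrow> C \<inter> I = {} \<and> C \<union> I = V \<and> is_clique E C \<and> is_independent E I"

definition split_graph :: "'a set \<Rightarrow> ('a \<Rightarrow> 'a \<Rightarrow> bool) \<Rightarrow> bool" where
  "split_graph V E \<longleftrightarrow> (\<exists>C I. split_partition V E C I)"

definition always_clique :: "'a set \<Rightarrow> ('a \<Rightarrow> 'a \<Rightarrow> bool) \<Rightarrow> 'a set" where
  "always_clique V E = {v \<in> V. \<forall>C I. split_partition V E C I \<longrightarrow> v \<in> C}"

definition always_independent :: "'a set \<Rightarrow> ('a \<Rightarrow> 'a \<Rightarrow> bool) \<Rightarrow> 'a set" where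
  "always_independent V E = {v \<in> V. \<forall>C I. split_partition V E C I \<longrightarrow> v \<in> I}"

definition questioning :: "'a set \<Rightarrow> ('a \<Rightarrow> 'a \<Rightarrow> bool) \<Rightarrow> 'a set" where
  "questioning V E = {v \<in> V. (\<exists>C I. split_partition V E C I \<and> v \<in> C) \<and>
                               (\<exists>C I. split_partition V E C I \<and> v \<in> I)}"

end

theory Submission
  imports Defs
begin

lemma sp_cover: "split_partition V E C I \<Longrightarrow> v \<in> V \<Longrightarrow> v \<in> C \<or> v \<in> I"
  unfolding split_partition_def by auto
lemma sp_disj: "split_partition V E C I \<Longrightarrow> v \<in> C \<Longrightarrow> v \<in> I \<Longrightarrow> False"
  unfolding split_partition_def by auto

lemma generic:
  assumes cover: "C \<union> I \<union> Q = V" and d1: "C \<inter> I = {}" and d2: "C \<inter> Q = {}" and d3: "I \<inter> Q = {}"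
    and all: "\<And>C' I'. split_partition V E C' I' \<Longrightarrow> C \<subseteq> C' \<and> I \<subseteq> I'"
    and qc: "\<And>q. q \<in> Q \<Longrightarrow> \<exists>C' I'. split_partition V E C' I' \<and> q \<in> C'"
    and qi: "\<And>q. q \<in> Q \<Longrightarrow> \<exists>C' I'. split_partition V E C' I' \<and> q \<in> I'"
    and sg: "split_graph V E"
  shows "split_graph V E \<and> always_clique V E = C \<and> always_independent V E = I
         \<and> questioning V E = Q"
proof -
  obtain C0 I0 where p0: "split_partition V E C0 I0" using sg split_graph_def by blast
  have A1: "v \<in> always_clique V E \<longleftrightarrow> v \<in> C" for v
  proof
    assume v: "v \<in> always_clique V E"
    hence vV: "v \<in> V" and vC: "\<And>C' I'. split_partition V E C' I' \<Longrightarrow> v \<in> C'"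
      unfolding always_clique_def by auto
    have "v \<notin> I"
    proof
      assume "v \<in> I" hence "v \<in> I0" using all[OF p0] by blast
      thus False using sp_disj[OF p0] vC[OF p0] by blast
    qed
    moreover have "v \<notin> Q"
    proof
      assume "v \<in> Q" then obtain C' I' where P: "split_partition V E C' I'" "v \<in> I'" using qi by blast
      thus False using vC[OF P(1)] sp_disj[OF P(1)] by blast
    qed
    ultimately show "v \<in> C" using vV cover by blast
  next
    assume "v \<in> C" thus "v \<in> always_clique V E" using all cover unfolding always_clique_def by blast
  qed
  have A2: "v \<in> always_independent V E \<longleftrightarrow> v \<in> I" for v
  proof
    assume v: "v \<in> always_independent V E"
    hence vV: "v \<in> V" and vI: "\<And>C' I'. split_partition V E C' I' \<Longrightarrow> v \<in> I'"
      unfolding always_independent_def by auto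
    have "v \<notin> C"
    proof
      assume "v \<in> C" hence "v \<in> C0" using all[OF p0] by blast
      thus False using sp_disj[OF p0] vI[OF p0] by blast
    qed
    moreover have "v \<notin> Q"
    proof
      assume "v \<in> Q" then obtain C' I' where P: "split_partition V E C' I'" "v \<in> C'" using qc by blast
      thus False using vI[OF P(1)] sp_disj[OF P(1)] by blast
    qed
    ultimately show "v \<in> I" using vV cover by blast
  next
    assume "v \<in> I" thus "v \<in> always_independent V E" using all cover unfolding always_independent_def by blast
  qed
  have A3: "v \<in> questioning V E \<longleftrightarrow> v \<in> Q" for v
  proof
    assume v: "v \<in> questioning V E"
    then obtain C1 I1 C2 I2 where h: "v \<in> V" "split_partition V E C1 I1" "v \<in> C1"
        "split_partition V E C2 I2" "v \<in> I2" unfolding questioning_def by blast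
    have "v \<notin> C" using all[OF h(4)] sp_disj[OF h(4)] h(5) by blast
    moreover have "v \<notin> I" using all[OF h(2)] sp_disj[OF h(2)] h(3) by blast
    ultimately show "v \<in> Q" using h(1) cover by blast
  next
    assume "v \<in> Q" thus "v \<in> questioning V E" using qc qi cover unfolding questioning_def by blast
  qed
  show ?thesis using sg A1 A2 A3 by blast
qed

lemma two_elems:
  assumes "card Q \<ge> 2" obtains a b where "a \<in> Q" "b \<in> Q" "a \<noteq> b"
proof -
  have "finite Q" "Q \<noteq> {}" using assms by (auto intro: card_ge_0_finite)
  then obtain a where a: "a \<in> Q" by auto
  have "card (Q - {a}) \<ge> 1" using assms a \<open>finite Q\<close> by (simp add: card_Diff_singleton)
  hence "Q - {a} \<noteq> {}" by (cases "Q - {a} = {}") auto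
  then obtain b where "b \<in> Q - {a}" by blast
  then show ?thesis using that a by auto
qed

theorem lemma8p5:
  fixes V :: "'a set" and E :: "'a \<Rightarrow> 'a \<Rightarrow> bool" and C I Q :: "'a set"
  assumes "graph V E"
    and "C \<union> I \<union> Q = V" and "C \<inter> I = {}" and "C \<inter> Q = {}" and "I \<inter> Q = {}"
    and "is_clique E C" and "is_independent E I"
    and "is_clique E Q \<or> is_independent E Q" and "card Q \<ge> 2"
    and "\<forall>q\<in>Q. (\<forall>c\<in>C. E q c) \<and> (\<forall>i\<in>I. \<not> E q i)"
    and "is_clique E Q \<longrightarrow> (\<forall>c\<in>C. \<exists>i\<in>I. E c i)"
    and "is_independent E Q \<longrightarrow> (\<forall>i\<in>I. \<exists>c\<in>C. \<not> E i c)"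
  shows "split_graph V E \<and> always_clique V E = C \<and> always_independent V E = I
         \<and> questioning V E = Q"
proof -
  have sym: "E u v \<Longrightarrow> E v u" for u v using assms(1) unfolding graph_def by blast
  have QC: "E q c" "E c q" if "q \<in> Q" "c \<in> C" for q c using assms(10) that sym by blast+
  have QI: "\<not> E q i" "\<not> E i q" if "q \<in> Q" "i \<in> I" for q i using assms(10) that sym by blast+
  have Cc: "E u v" if "u \<in> C" "v \<in> C" "u \<noteq> v" for u v using assms(6) that unfolding is_clique_def by blast
  have Ii: "\<not> E u v" if "u \<in> I" "v \<in> I" for u v using assms(7) that unfolding is_independent_def by blast
  obtain a b where ab: "a \<in> Q" "b \<in> Q" "a \<noteq> b" using two_elems assms(9) by blast
  from assms(8) show ?thesis
  proof
    assume qcl: "is_clique E Q"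
    have Qq: "E u v" if "u \<in> Q" "v \<in> Q" "u \<noteq> v" for u v using qcl that unfolding is_clique_def by blast
    have nb: "\<forall>c\<in>C. \<exists>i\<in>I. E c i" using assms(11) qcl by blast
    have P1: "split_partition V E (C \<union> Q) I"
      unfolding split_partition_def is_clique_def
    proof (intro conjI ballI impI)
      show "(C \<union> Q) \<inter> I = {}" "C \<union> Q \<union> I = V" using assms(2-5) by blast+
      show "is_independent E I" by fact
      fix u v assume "u \<in> C \<union> Q" "v \<in> C \<union> Q" "u \<noteq> v"
      thus "E u v" using Cc Qq QC by blast
    qed
    have P2: "split_partition V E (C \<union> Q - {q}) (I \<union> {q})" if q: "q \<in> Q" for q
      unfolding split_partition_def is_clique_def is_independent_def
    proof (intro conjI ballI impI)
      show "(C \<union> Q - {q}) \<inter> (I \<union> {q}) = {}" "C \<union> Q - {q} \<union> (I \<union> {q}) = V" using assms(2-5) q by blast+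
      fix u v assume "u \<in> C \<union> Q - {q}" "v \<in> C \<union> Q - {q}" "u \<noteq> v"
      thus "E u v" using Cc Qq QC by blast
    next
      fix u v assume "u \<in> I \<union> {q}" "v \<in> I \<union> {q}"
      thus "\<not> E u v" using Ii QI q assms(1) unfolding graph_def by blast
    qed
    have all: "C \<subseteq> C' \<and> I \<subseteq> I'" if sp: "split_partition V E C' I'" for C' I'
    proof -
      from sp have spC: "E u v" if "u \<in> C'" "v \<in> C'" "u \<noteq> v" for u v
        using that unfolding split_partition_def is_clique_def by blast
      from sp have spI: "\<not> E u v" if "u \<in> I'" "v \<in> I'" for u v
        using that unfolding split_partition_def is_independent_def by blast
      from sp have cov: "v \<in> C' \<or> v \<in> I'" if "v \<in> V" for v
        using that unfolding split_partition_def by blast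
      have "\<exists>q\<in>Q. q \<in> C'"
      proof (rule ccontr)
        assume "\<not> ?thesis"
        hence "a \<in> I'" "b \<in> I'" using ab cov assms(2) by blast+
        moreover have "E a b" using Qq ab by blast
        ultimately show False using spI by blast
      qed
      then obtain q where q: "q \<in> Q" "q \<in> C'" by blast
      have iC: "i \<notin> C'" if "i \<in> I" for i
      proof
        assume "i \<in> C'"
        moreover have "q \<noteq> i" using q that assms(5) by blast
        ultimately have "E q i" using spC q by blast
        thus False using QI q that by blast
      qed
      have "I \<subseteq> I'" using iC cov assms(2) by blast
      moreover have "C \<subseteq> C'"
      proof
        fix c assume c: "c \<in> C"
        then obtain i where i: "i \<in> I" "E c i" using nb by blast
        have "c \<in> V" "i \<in> V" using c i assms(2) by blast+
        then show "c \<in> C'" using iC[OF i(1)] cov spI i(2) by blast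
      qed
      ultimately show ?thesis by blast
    qed
    show ?thesis
    proof (rule generic[OF assms(2-5) all])
      show "\<exists>C' I'. split_partition V E C' I' \<and> q \<in> C'" if "q \<in> Q" for q using P1 that by blast
      show "\<exists>C' I'. split_partition V E C' I' \<and> q \<in> I'" if "q \<in> Q" for q using P2[OF that] by blast
      show "split_graph V E" using P1 unfolding split_graph_def by blast
    qed
  next
    assume qin: "is_independent E Q"
    have Qq: "\<not> E u v" if "u \<in> Q" "v \<in> Q" for u v using qin that unfolding is_independent_def by blast
    have nb: "\<forall>i\<in>I. \<exists>c\<in>C. \<not> E i c" using assms(12) qin by blast
    have P1: "split_partition V E C (I \<union> Q)"
      unfolding split_partition_def is_independent_def
    proof (intro conjI ballI)
      show "C \<inter> (I \<union> Q) = {}" "C \<union> (I \<union> Q) = V" using assms(2-5) by blast+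
      show "is_clique E C" by fact
      fix u v assume "u \<in> I \<union> Q" "v \<in> I \<union> Q"
      thus "\<not> E u v" using Ii Qq QI by blast
    qed
    have P2: "split_partition V E (C \<union> {q}) (I \<union> Q - {q})" if q: "q \<in> Q" for q
      unfolding split_partition_def is_clique_def is_independent_def
    proof (intro conjI ballI impI)
      show "(C \<union> {q}) \<inter> (I \<union> Q - {q}) = {}" "C \<union> {q} \<union> (I \<union> Q - {q}) = V" using assms(2-5) q by blast+
      fix u v assume "u \<in> C \<union> {q}" "v \<in> C \<union> {q}" "u \<noteq> v"
      thus "E u v" using Cc QC q by blast
    next
      fix u v assume "u \<in> I \<union> Q - {q}" "v \<in> I \<union> Q - {q}"
      thus "\<not> E u v" using Ii QI Qq by blast
    qed
    have all: "C \<subseteq> C' \<and> I \<subseteq> I'" if sp: "split_partition V E C' I'" for C' I'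
    proof -
      from sp have spC: "E u v" if "u \<in> C'" "v \<in> C'" "u \<noteq> v" for u v
        using that unfolding split_partition_def is_clique_def by blast
      from sp have spI: "\<not> E u v" if "u \<in> I'" "v \<in> I'" for u v
        using that unfolding split_partition_def is_independent_def by blast
      from sp have cov: "v \<in> C' \<or> v \<in> I'" if "v \<in> V" for v
        using that unfolding split_partition_def by blast
      have "\<exists>q\<in>Q. q \<in> I'"
      proof (rule ccontr)
        assume "\<not> ?thesis"
        hence "a \<in> C'" "b \<in> C'" using ab cov assms(2) by blast+
        moreover have "\<not> E a b" using Qq ab by blast
        ultimately show False using spC ab(3) by blast
      qed
      then obtain q where q: "q \<in> Q" "q \<in> I'" by blast
      have cI: "c \<notin> I'" if "c \<in> C" for c
      proof
        assume "c \<in> I'"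
        moreover have "E q c" using QC q that by blast
        ultimately show False using spI q by blast
      qed
      have CC: "C \<subseteq> C'" using cI cov assms(2) by blast
      moreover have "I \<subseteq> I'"
      proof
        fix i assume i: "i \<in> I"
        then obtain c where c: "c \<in> C" "\<not> E i c" using nb by blast
        have "i \<in> V" using i assms(2) by blast
        moreover have "i \<noteq> c" using i c assms(3) by blast
        moreover have "c \<in> C'" using CC c by blast
        ultimately show "i \<in> I'" using cov spC c(2) by blast
      qed
      ultimately show ?thesis by blast
    qed
    show ?thesis
    proof (rule generic[OF assms(2-5) all])
      show "\<exists>C' I'. split_partition V E C' I' \<and> q \<in> C'" if "q \<in> Q" for q using P2[OF that] by blast
      show "\<exists>C' I'. split_partition V E C' I' \<and> q \<in> I'" if "q \<in> Q" for q using P1 that by blast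
      show "split_graph V E" using P1 unfolding split_graph_def by blast
    qed
  qed
qed
end
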